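(* Let $n\ge3$, $\Omega\subset\mathbb{R}^n$ a smooth bounded domain and $m>0$. There exists a constant $C>0$ depending only on $n$, $m$ and $\Omega$ such that for every $U\in H^1_{0,L}(\mathcal{C})$, $$\int_{\mathcal{C}}|\nabla U|^2dx\,dt+m^2\int_{\mathcal{C}}U^2dx\,dt-m\int_\Omega U(x,0)^2dx\ \ge\ C\int_{\mathcal{C}}|\nabla U|^2dx\,dt.$$
   Context: $\mathcal{C}=\Omega\times(0,\infty)$ with points $(x,t)$, $\partial_L\mathcal{C}=\partial\Omega\times(0,\infty)$, $H^1_{0,L}(\mathcal{C})=\{U\in H^1(\mathcal{C}):U=0\text{ on }\partial_L\mathcal{C}\}$ (trace sense), and $U(x,0)$ denotes the trace of $U$ on $\Omega\times\{0\}$. *)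

theory Defs
  imports "HOL-Analysis.Analysis"
begin

fun dirderivs :: "'a::euclidean_space list \<Rightarrow> ('a \<Rightarrow> real) \<Rightarrow> 'a \<Rightarrow> real" where
  "dirderivs [] f = f"
| "dirderivs (v # vs) f = (\<lambda>x. frechet_derivative (dirderivs vs f) (at x) v)"

definition smooth_fun :: "('a::euclidean_space \<Rightarrow> real) \<Rightarrow> bool" where
  "smooth_fun f \<longleftrightarrow> (\<forall>vs x. dirderivs vs f differentiable (at x))"

definition supp_closed :: "('a::euclidean_space \<Rightarrow> real) \<Rightarrow> 'a set" where
  "supp_closed f = closure {x. f x \<noteq> 0}"

definition grad :: "('a::euclidean_space \<Rightarrow> real) \<Rightarrow> 'a \<Rightarrow> 'a" where
  "grad f x = (\<Sum>b\<in>Basis. frechet_derivative f (at x) b *\<^sub>R b)"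

definition smooth_bounded_domain :: "('a::euclidean_space) set \<Rightarrow> bool" where
  "smooth_bounded_domain \<Omega> \<longleftrightarrow> bounded \<Omega> \<and> connected \<Omega> \<and> \<Omega> \<noteq> {} \<and>
     (\<exists>\<rho>. smooth_fun \<rho> \<and> \<Omega> = {x. \<rho> x < 0} \<and>
          (\<forall>x. \<rho> x = 0 \<longrightarrow> grad \<rho> x \<noteq> 0))"

definition cyl :: "'a set \<Rightarrow> ('a \<times> real) set" where
  "cyl \<Omega> = \<Omega> \<times> {0<..}"

definition weak_grad :: "'a::euclidean_space set \<Rightarrow> ('a \<Rightarrow> real) \<Rightarrow> ('a \<Rightarrow> 'a) \<Rightarrow> bool" where
  "weak_grad C U G \<longleftrightarrow>
     (\<forall>\<phi> v. smooth_fun \<phi> \<and> compact (supp_closed \<phi>) \<and> supp_closed \<phi> \<subseteq> C \<longrightarrow>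
        (\<integral>p. U p * frechet_derivative \<phi> (at p) v \<partial>lebesgue_on C)
          = - (\<integral>p. (G p \<bullet> v) * \<phi> p \<partial>lebesgue_on C))"

definition H1 :: "'a::euclidean_space set \<Rightarrow> ('a \<Rightarrow> real) \<Rightarrow> ('a \<Rightarrow> 'a) \<Rightarrow> bool" where
  "H1 C U G \<longleftrightarrow>
     U \<in> borel_measurable (lebesgue_on C) \<and> G \<in> borel_measurable (lebesgue_on C) \<and>
     integrable (lebesgue_on C) (\<lambda>p. (U p)\<^sup>2) \<and>
     integrable (lebesgue_on C) (\<lambda>p. (norm (G p))\<^sup>2) \<and>
     weak_grad C U G"

text \<open>\<open>U \<in> H^1_{0,L}(\<Omega> \<times> (0,\<infinity>))\<close> with weak gradient \<open>G\<close> and trace \<open>g\<close> on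
  \<open>\<Omega> \<times> {0}\<close>: \<open>U\<close> is the \<open>H^1\<close>-limit of smooth compactly supported functions
  vanishing on the lateral boundary, and \<open>g\<close> is the \<open>L^2(\<Omega>)\<close>-limit of their
  restrictions to \<open>t = 0\<close> (trace in the sense of the continuous trace operator).\<close>
definition H10L_trace ::
  "'a::euclidean_space set \<Rightarrow> ('a \<times> real \<Rightarrow> real) \<Rightarrow> ('a \<times> real \<Rightarrow> 'a \<times> real) \<Rightarrow> ('a \<Rightarrow> real) \<Rightarrow> bool" where
  "H10L_trace \<Omega> U G g \<longleftrightarrow>
     H1 (cyl \<Omega>) U G \<and>
     g \<in> borel_measurable (lebesgue_on \<Omega>) \<and> integrable (lebesgue_on \<Omega>) (\<lambda>x. (g x)\<^sup>2) \<and>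
     (\<exists>\<phi> :: nat \<Rightarrow> ('a \<times> real \<Rightarrow> real).
        (\<forall>k. smooth_fun (\<phi> k) \<and> compact (supp_closed (\<phi> k)) \<and>
             (\<forall>x\<in>frontier \<Omega>. \<forall>t. \<phi> k (x, t) = 0)) \<and>
        (\<lambda>k. \<integral>p. (\<phi> k p - U p)\<^sup>2 \<partial>lebesgue_on (cyl \<Omega>)) \<longlonglongrightarrow> 0 \<and>
        (\<lambda>k. \<integral>p. (norm (grad (\<phi> k) p - G p))\<^sup>2 \<partial>lebesgue_on (cyl \<Omega>)) \<longlonglongrightarrow> 0 \<and>
        (\<lambda>k. \<integral>x. (\<phi> k (x, 0) - g x)\<^sup>2 \<partial>lebesgue_on \<Omega>) \<longlonglongrightarrow> 0)"

end

theory Submission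
  imports Defs
begin


lemma nn_bridge:
  fixes f :: "'a::euclidean_space \<Rightarrow> real"
  assumes S: "S \<in> sets borel" and fm: "f \<in> borel_measurable borel" and nn: "\<And>x. 0 \<le> f x"
    and int: "integrable (lebesgue_on S) f"
  shows "ennreal (\<integral>x. f x \<partial>lebesgue_on S) = (\<integral>\<^sup>+x. ennreal (indicator S x * f x) \<partial>lborel)"
proof -
  have Sl: "S \<inter> space lebesgue \<in> sets lebesgue" using S by auto
  have "ennreal (\<integral>x. f x \<partial>lebesgue_on S) = (\<integral>\<^sup>+x. ennreal (f x) \<partial>lebesgue_on S)"
    using int nn by (subst nn_integral_eq_integral) auto
  also have "\<dots> = (\<integral>\<^sup>+x. ennreal (f x) * indicator S x \<partial>lebesgue)"
    by (rule nn_integral_restrict_space[OF Sl])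
  also have "\<dots> = (\<integral>\<^sup>+x. ennreal (f x) * indicator S x \<partial>lborel)"
    by (simp add: nn_integral_completion)
  also have "\<dots> = (\<integral>\<^sup>+x. ennreal (indicator S x * f x) \<partial>lborel)"
    by (intro nn_integral_cong) (auto simp: indicator_def)
  finally show ?thesis .
qed

lemma int_compact_support:
  fixes f :: "'a::euclidean_space \<Rightarrow> real"
  assumes S: "S \<in> sets lebesgue" and K: "compact K" and c: "continuous_on UNIV f"
    and z: "\<And>x. x \<notin> K \<Longrightarrow> f x = 0"
  shows "integrable (lebesgue_on S) f"
proof -
  have "integrable lborel (\<lambda>x. indicator K x *\<^sub>R f x)"
    by (rule borel_integrable_compact[OF K]) (rule continuous_on_subset[OF c], auto)
  moreover have "(\<lambda>x. indicator K x *\<^sub>R f x) = f"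
  proof
    fix x show "indicator K x *\<^sub>R f x = f x" using z[of x] by (cases "x \<in> K") auto
  qed
  ultimately have "integrable lborel f" by simp
  then have "integrable lebesgue f"
    using c by (subst integrable_completion) (auto intro: borel_measurable_continuous_onI)
  then have "integrable lebesgue (\<lambda>x. indicator S x *\<^sub>R f x)"
    by (rule integrable_mult_indicator[OF S])
  then show ?thesis using S by (subst integrable_restrict_space) auto
qed

lemma smooth_hasderiv:
  assumes "smooth_fun \<phi>"
  shows "(\<phi> has_derivative frechet_derivative \<phi> (at x)) (at x)"
  using assms unfolding smooth_fun_def
  by (metis dirderivs.simps(1) frechet_derivative_works)

lemma smooth_cont: "smooth_fun \<phi> \<Longrightarrow> continuous_on UNIV \<phi>"
  by (meson continuous_at_imp_continuous_on has_derivative_continuous smooth_hasderiv)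

lemma smooth_dcont:
  assumes "smooth_fun \<phi>"
  shows "continuous_on UNIV (\<lambda>x. frechet_derivative \<phi> (at x) v)"
proof -
  have "\<And>x. dirderivs [v] \<phi> differentiable (at x)" using assms unfolding smooth_fun_def by blast
  then have "\<And>x. isCont (dirderivs [v] \<phi>) x" by (simp add: differentiable_imp_continuous_within)
  then show ?thesis by (simp add: continuous_at_imp_continuous_on)
qed

lemma supp_nz: "\<phi> x \<noteq> 0 \<Longrightarrow> x \<in> supp_closed \<phi>"
  unfolding supp_closed_def by (simp add: closure_def)

lemma deriv_out_supp:
  assumes "x \<notin> supp_closed \<phi>"
  shows "frechet_derivative \<phi> (at x) v = 0"
proof -
  have o: "open (- supp_closed \<phi>)" unfolding supp_closed_def by auto
  have "((\<lambda>_. 0) has_derivative (\<lambda>_. 0)) (at x)" by simp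
  then have "(\<phi> has_derivative (\<lambda>_. 0)) (at x)"
    by (rule has_derivative_transform_within_open[OF _ o]) (use assms supp_nz in auto)
  then have "frechet_derivative \<phi> (at x) = (\<lambda>_. 0)" by (metis frechet_derivative_at)
  then show ?thesis by simp
qed

lemma line_deriv:
  assumes "smooth_fun \<phi>"
  shows "((\<lambda>s. \<phi> (p + s *\<^sub>R w)) has_real_derivative frechet_derivative \<phi> (at (p + s *\<^sub>R w)) w) (at s)"
proof -
  let ?D = "frechet_derivative \<phi> (at (p + s *\<^sub>R w))"
  have l: "((\<lambda>s. p + s *\<^sub>R w) has_derivative (\<lambda>h. h *\<^sub>R w)) (at s)"
    by (auto intro!: derivative_eq_intros)
  have d: "(\<phi> has_derivative ?D) (at (p + s *\<^sub>R w))" by (rule smooth_hasderiv[OF assms])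
  have "((\<lambda>s. \<phi> (p + s *\<^sub>R w)) has_derivative (\<lambda>h. ?D (h *\<^sub>R w))) (at s)"
    using has_derivative_compose[OF l d] by (simp add: o_def)
  moreover have "(\<lambda>h. ?D (h *\<^sub>R w)) = (\<lambda>h. ?D w * h)"
    using has_derivative_linear[OF d] by (auto simp: linear_scale)
  ultimately show ?thesis by (simp add: has_field_derivative_def)
qed

lemma grad_norm_ge:
  fixes \<phi> :: "('a::euclidean_space \<times> real) \<Rightarrow> real"
  assumes e: "e \<in> Basis"
  shows "(frechet_derivative \<phi> (at p) (0,1))\<^sup>2 + (frechet_derivative \<phi> (at p) (e,0))\<^sup>2 \<le> (norm (grad \<phi> p))\<^sup>2"
proof -
  let ?g = "grad \<phi> p"
  have gi: "?g \<bullet> b = frechet_derivative \<phi> (at p) b" if "b \<in> Basis" for b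
    using that unfolding grad_def by (simp add: inner_sum_left inner_Basis if_distrib cong: if_cong)
  have B: "(0::'a,1::real) \<in> Basis" "(e,0::real) \<in> Basis" using e by (auto simp: Basis_prod_def)
  have ne: "(0::'a,1::real) \<noteq> (e,0)" using e by auto
  have "(norm ?g)\<^sup>2 = ?g \<bullet> ?g" by (rule power2_norm_eq_inner)
  also have "\<dots> = (\<Sum>b\<in>Basis. (?g \<bullet> b)\<^sup>2)"
    by (subst euclidean_inner) (simp add: power2_eq_square)
  also have "\<dots> \<ge> (\<Sum>b\<in>{(0,1),(e,0)}. (?g \<bullet> b)\<^sup>2)"
    by (rule sum_mono2) (use B in auto)
  finally show ?thesis using B ne gi by simp
qed

lemma real_lim_aux:
  fixes a :: real and ak d :: "nat \<Rightarrow> real"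
  assumes a0: "a \<ge> 0" and d: "d \<longlonglongrightarrow> 0"
    and up: "\<And>\<epsilon> k. \<epsilon> > 0 \<Longrightarrow> ak k \<le> (1+\<epsilon>)*a + (1+1/\<epsilon>)*d k"
    and lo: "\<And>\<epsilon> k. \<epsilon> > 0 \<Longrightarrow> a \<le> (1+\<epsilon>)*ak k + (1+1/\<epsilon>)*d k"
  shows "ak \<longlonglongrightarrow> a"
proof (rule LIMSEQ_I)
  fix r :: real assume r: "r > 0"
  define \<epsilon> where "\<epsilon> = r/(4*(a+1))"
  have e: "\<epsilon> > 0" using r a0 by (simp add: \<epsilon>_def)
  have ea: "\<epsilon>*a < r/4"
  proof -
    have "\<epsilon>*a = (r/4) * (a/(a+1))" by (simp add: \<epsilon>_def)
    also have "\<dots> < (r/4) * 1"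
    proof (rule mult_strict_left_mono)
      show "a/(a+1) < 1" using a0 by simp
    qed (use r in simp)
    finally show ?thesis by simp
  qed
  define c where "c = 1 + 1/\<epsilon>"
  have c: "c > 0" using e by (simp add: c_def add_pos_pos)
  have "r/(4*c) > 0" using r c by simp
  from LIMSEQ_D[OF d this] obtain N where N: "\<And>k. k \<ge> N \<Longrightarrow> norm (d k - 0) < r/(4*c)" by blast
  show "\<exists>N. \<forall>k\<ge>N. norm (ak k - a) < r"
  proof (intro exI allI impI)
    fix k assume k: "k \<ge> N"
    have "\<bar>d k\<bar> < r/(4*c)" using N[OF k] by simp
    then have cd: "c * \<bar>d k\<bar> < r/4" using c by (simp add: field_simps)
    have cd2: "\<bar>c * d k\<bar> < r/4" using cd c by (simp add: abs_mult)
    have u: "ak k \<le> (1+\<epsilon>)*a + c*d k" using up[OF e] by (simp add: c_def)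
    have l: "a \<le> (1+\<epsilon>)*ak k + c*d k" using lo[OF e] by (simp add: c_def)
    have l2: "(1+\<epsilon>)*(a - ak k) \<le> \<epsilon>*a + c*d k" using l by (simp add: algebra_simps)
    have "a - ak k < r"
    proof (rule ccontr)
      assume "\<not> a - ak k < r"
      then have "(1+\<epsilon>)*(a - ak k) \<ge> (1+\<epsilon>)*r" using e by (intro mult_left_mono) auto
      moreover have "(1+\<epsilon>)*r \<ge> r" using e r by simp
      moreover have "c * d k < r/4" using cd2 by (simp add: abs_less_iff)
      ultimately show False using l2 ea r by linarith
    qed
    moreover have "ak k - a < r"
    proof -
      have "c * d k < r/4" using cd2 by (simp add: abs_less_iff)
      moreover have "(1+\<epsilon>)*a = a + \<epsilon>*a" by (simp add: algebra_simps)
      ultimately show ?thesis using u ea r by linarith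
    qed
    ultimately show "norm (ak k - a) < r" by simp
  qed
qed

lemma sq_tri:
  fixes u v :: "'c::real_normed_vector"
  assumes e: "\<epsilon> > 0"
  shows "(norm u)\<^sup>2 \<le> (1+\<epsilon>)*(norm v)\<^sup>2 + (1+1/\<epsilon>)*(norm (u - v))\<^sup>2"
proof -
  define p where "p = norm v"
  define q where "q = norm (u - v)"
  have p: "p \<ge> 0" and q: "q \<ge> 0" by (auto simp: p_def q_def)
  have t: "norm u \<le> p + q" unfolding p_def q_def by (metis add.commute diff_add_cancel norm_triangle_ineq)
  have "(norm u)\<^sup>2 \<le> (p+q)\<^sup>2" using t by (simp add: power_mono)
  also have "\<dots> \<le> (1+\<epsilon>)*p\<^sup>2 + (1+1/\<epsilon>)*q\<^sup>2"
  proof -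
    have "0 \<le> (\<epsilon>*p - q)\<^sup>2 / \<epsilon>" using e by simp
    also have "\<dots> = \<epsilon>*p\<^sup>2 - 2*p*q + q\<^sup>2/\<epsilon>" using e by (simp add: power2_eq_square field_simps)
    finally show ?thesis by (simp add: power2_eq_square algebra_simps add_divide_distrib)
  qed
  finally show ?thesis by (simp add: p_def q_def)
qed

lemma L2_conv:
  fixes F :: "'b \<Rightarrow> 'c::{banach, second_countable_topology}" and Fk :: "nat \<Rightarrow> 'b \<Rightarrow> 'c"
  assumes iF: "integrable M (\<lambda>p. (norm (F p))\<^sup>2)"
    and iFk: "\<And>k. integrable M (\<lambda>p. (norm (Fk k p))\<^sup>2)"
    and iD: "\<And>k. integrable M (\<lambda>p. (norm (Fk k p - F p))\<^sup>2)"
    and lim: "(\<lambda>k. \<integral>p. (norm (Fk k p - F p))\<^sup>2 \<partial>M) \<longlonglongrightarrow> 0"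
  shows "(\<lambda>k. \<integral>p. (norm (Fk k p))\<^sup>2 \<partial>M) \<longlonglongrightarrow> (\<integral>p. (norm (F p))\<^sup>2 \<partial>M)"
proof (rule real_lim_aux[OF _ lim])
  show "0 \<le> (\<integral>p. (norm (F p))\<^sup>2 \<partial>M)" by simp
next
  fix \<epsilon> :: real and k assume e: "\<epsilon> > 0"
  have "(\<integral>p. (norm (Fk k p))\<^sup>2 \<partial>M) \<le> (\<integral>p. (1+\<epsilon>)*(norm (F p))\<^sup>2 + (1+1/\<epsilon>)*(norm (Fk k p - F p))\<^sup>2 \<partial>M)"
    by (rule integral_mono) (use iF iFk iD sq_tri[OF e] in auto)
  also have "\<dots> = (1+\<epsilon>)*(\<integral>p. (norm (F p))\<^sup>2 \<partial>M) + (1+1/\<epsilon>)*(\<integral>p. (norm (Fk k p - F p))\<^sup>2 \<partial>M)"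
    using iF iD by simp
  finally show "(\<integral>p. (norm (Fk k p))\<^sup>2 \<partial>M) \<le> (1+\<epsilon>)*(\<integral>p. (norm (F p))\<^sup>2 \<partial>M) + (1+1/\<epsilon>)*(\<integral>p. (norm (Fk k p - F p))\<^sup>2 \<partial>M)" .
next
  fix \<epsilon> :: real and k assume e: "\<epsilon> > 0"
  have "(\<integral>p. (norm (F p))\<^sup>2 \<partial>M) \<le> (\<integral>p. (1+\<epsilon>)*(norm (Fk k p))\<^sup>2 + (1+1/\<epsilon>)*(norm (Fk k p - F p))\<^sup>2 \<partial>M)"
  proof (rule integral_mono)
    fix p show "(norm (F p))\<^sup>2 \<le> (1+\<epsilon>)*(norm (Fk k p))\<^sup>2 + (1+1/\<epsilon>)*(norm (Fk k p - F p))\<^sup>2"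
      using sq_tri[OF e, of "F p" "Fk k p"] by (simp add: norm_minus_commute)
  qed (use iF iFk iD in auto)
  also have "\<dots> = (1+\<epsilon>)*(\<integral>p. (norm (Fk k p))\<^sup>2 \<partial>M) + (1+1/\<epsilon>)*(\<integral>p. (norm (Fk k p - F p))\<^sup>2 \<partial>M)"
    using iFk iD by simp
  finally show "(\<integral>p. (norm (F p))\<^sup>2 \<partial>M) \<le> (1+\<epsilon>)*(\<integral>p. (norm (Fk k p))\<^sup>2 \<partial>M) + (1+1/\<epsilon>)*(\<integral>p. (norm (Fk k p - F p))\<^sup>2 \<partial>M)" .
qed

lemma int_diff_sq:
  fixes F G :: "'b \<Rightarrow> 'c::{banach, second_countable_topology}"
  assumes "integrable M (\<lambda>p. (norm (F p))\<^sup>2)" "integrable M (\<lambda>p. (norm (G p))\<^sup>2)"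
    "F \<in> borel_measurable M" "G \<in> borel_measurable M"
  shows "integrable M (\<lambda>p. (norm (F p - G p))\<^sup>2)"
proof (rule Bochner_Integration.integrable_bound)
  show "integrable M (\<lambda>p. 2*(norm (G p))\<^sup>2 + 2*(norm (F p))\<^sup>2)" using assms by simp
  show "(\<lambda>p. (norm (F p - G p))\<^sup>2) \<in> borel_measurable M" using assms by measurable
  show "AE p in M. norm ((norm (F p - G p))\<^sup>2) \<le> norm (2*(norm (G p))\<^sup>2 + 2*(norm (F p))\<^sup>2)"
  proof (intro AE_I2)
    fix p
    have "(norm (F p - G p))\<^sup>2 \<le> (1+1)*(norm (-G p))\<^sup>2 + (1+1/1)*(norm (F p - G p - (- G p)))\<^sup>2"
      by (rule sq_tri) simp
    then show "norm ((norm (F p - G p))\<^sup>2) \<le> norm (2*(norm (G p))\<^sup>2 + 2*(norm (F p))\<^sup>2)" by simp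
  qed
qed

lemma amgm_abs:
  fixes a y z :: real
  assumes a: "a > 0"
  shows "\<bar>2*y*z\<bar> \<le> a*y\<^sup>2 + z\<^sup>2/a"
proof -
  have "0 \<le> (a*\<bar>y\<bar> - \<bar>z\<bar>)\<^sup>2 / a" using a by simp
  also have "\<dots> = a*y\<^sup>2 - 2*\<bar>y\<bar>*\<bar>z\<bar> + z\<^sup>2/a" using a by (simp add: power2_eq_square field_simps)
  finally show ?thesis by (simp add: abs_mult)
qed

lemma line_bound:
  fixes \<phi> :: "'a::euclidean_space \<Rightarrow> real"
  assumes sm: "smooth_fun \<phi>" and L: "0 \<le> L" and z: "\<phi> (p + L *\<^sub>R w) = 0"
  shows "ennreal ((\<phi> p)\<^sup>2) \<le> (\<integral>\<^sup>+s. ennreal (indicator {0..L} s *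
            \<bar>2 * \<phi> (p + s *\<^sub>R w) * frechet_derivative \<phi> (at (p + s *\<^sub>R w)) w\<bar>) \<partial>lborel)"
proof -
  define g where "g s = 2 * \<phi> (p + s *\<^sub>R w) * frechet_derivative \<phi> (at (p + s *\<^sub>R w)) w" for s
  define h where "h s = (\<phi> (p + s *\<^sub>R w))\<^sup>2" for s
  have hd: "(h has_real_derivative g s) (at s)" for s
  proof -
    show ?thesis using DERIV_power[OF line_deriv[OF sm, of p w s], of 2]
      by (simp add: h_def[abs_def] g_def algebra_simps)
  qed
  have "(g has_integral (h L - h 0)) {0..L}"
    by (rule fundamental_theorem_of_calculus[OF L])
       (simp add: has_real_derivative_iff_has_vector_derivative[symmetric] hd has_field_derivative_at_within)
  then have "(g has_integral (- (\<phi> p)\<^sup>2)) {0..L}" by (simp add: h_def z)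
  then have i1: "((\<lambda>s. - g s) has_integral (\<phi> p)\<^sup>2) {0..L}" using has_integral_neg[of g "- (\<phi> p)\<^sup>2" "{0..L}"] by simp
  have cg: "continuous_on UNIV g"
  proof -
    have cl: "continuous_on UNIV (\<lambda>s::real. p + s *\<^sub>R w)" by (intro continuous_intros)
    have c1: "continuous_on UNIV (\<lambda>s. \<phi> (p + s *\<^sub>R w))"
      using continuous_on_compose[OF cl continuous_on_subset[OF smooth_cont[OF sm]]] by (simp add: o_def)
    have c2: "continuous_on UNIV (\<lambda>s. frechet_derivative \<phi> (at (p + s *\<^sub>R w)) w)"
      using continuous_on_compose[OF cl continuous_on_subset[OF smooth_dcont[OF sm]]] by (simp add: o_def)
    show ?thesis unfolding g_def by (intro continuous_intros c1 c2)
  qed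
  have ia: "(\<lambda>s. \<bar>g s\<bar>) integrable_on {0..L}"
    by (rule integrable_continuous_interval) (intro continuous_intros continuous_on_subset[OF cg], simp)
  have le: "(\<phi> p)\<^sup>2 \<le> integral {0..L} (\<lambda>s. \<bar>g s\<bar>)"
    using has_integral_le[OF i1 integrable_integral[OF ia]] by simp
  have eq: "(\<integral>\<^sup>+s. ennreal (indicator {0..L} s * \<bar>g s\<bar>) \<partial>lborel) = ennreal (integral {0..L} (\<lambda>s. \<bar>g s\<bar>))"
    by (rule nn_integral_has_integral_lebesgue) (auto intro: integrable_integral[OF ia])
  have "ennreal ((\<phi> p)\<^sup>2) \<le> ennreal (integral {0..L} (\<lambda>s. \<bar>g s\<bar>))" using le by (rule ennreal_leI)
  also have "\<dots> = (\<integral>\<^sup>+s. ennreal (indicator {0..L} s * \<bar>g s\<bar>) \<partial>lborel)" using eq by simp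
  finally show ?thesis by (simp add: g_def)
qed



lemma meas_helper:
  fixes f :: "'a::euclidean_space \<Rightarrow> real"
  assumes "open S" "continuous_on UNIV f"
  shows "(\<lambda>p. ennreal (indicator S p * f p)) \<in> borel_measurable lborel"
proof -
  have [measurable]: "S \<in> sets borel" using assms by (simp add: borel_open)
  have [measurable]: "f \<in> borel_measurable borel" using assms by (simp add: borel_measurable_continuous_onI)
  show ?thesis by measurable
qed

lemma trace_real:
  fixes \<phi> :: "'a::euclidean_space \<times> real \<Rightarrow> real" and \<Omega> :: "'a set"
  assumes sm: "smooth_fun \<phi>" and cK: "compact (supp_closed \<phi>)" and o: "open \<Omega>" and a: "a > 0"
  shows "(\<integral>x. (\<phi> (x,0))\<^sup>2 \<partial>lebesgue_on \<Omega>) \<le>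
     a * (\<integral>p. (\<phi> p)\<^sup>2 \<partial>lebesgue_on (\<Omega> \<times> {0<..})) +
     (1/a) * (\<integral>p. (frechet_derivative \<phi> (at p) (0,1))\<^sup>2 \<partial>lebesgue_on (\<Omega> \<times> {0<..}))"
proof -
  define K where "K = supp_closed \<phi>"
  define S where "S = \<Omega> \<times> {0::real<..}"
  define Dt where "Dt p = frechet_derivative \<phi> (at p) (0,1)" for p
  define F where "F p = a * (\<phi> p)\<^sup>2 + (1/a) * (Dt p)\<^sup>2" for p
  have oS: "open S" unfolding S_def using o by (intro open_Times) auto
  obtain R where R: "R > 0" "\<And>p. p \<in> K \<Longrightarrow> norm p \<le> R"
    using cK compact_imp_bounded[of K] unfolding K_def bounded_pos by auto
  have phi0: "\<phi> p = 0" if "p \<notin> K" for p using that supp_nz unfolding K_def by blast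
  have Dt0: "Dt p = 0" if "p \<notin> K" for p using that deriv_out_supp unfolding K_def Dt_def by blast
  have cphi: "continuous_on UNIV \<phi>" by (rule smooth_cont[OF sm])
  have cDt: "continuous_on UNIV Dt" unfolding Dt_def by (rule smooth_dcont[OF sm])
  have cF: "continuous_on UNIV F" unfolding F_def by (intro continuous_intros cphi cDt)
  have F0: "F p = 0" if "p \<notin> K" for p using that phi0 Dt0 by (simp add: F_def)
  have Fnn: "F p \<ge> 0" for p using a by (simp add: F_def)
  have pt: "ennreal (indicator \<Omega> x * (\<phi> (x,0))\<^sup>2) \<le> (\<integral>\<^sup>+t. ennreal (indicator S (x,t) * F (x,t)) \<partial>lborel)" for x
  proof (cases "x \<in> \<Omega>")
    case False then show ?thesis by simp
  next
    case True
    let ?L = "R + 1"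
    have "norm (x, ?L) \<ge> ?L" using norm_snd_le[of ?L x] R by simp
    then have "(x, ?L) \<notin> K" using R by force
    then have z: "\<phi> ((x,0) + ?L *\<^sub>R (0,1)) = 0" using phi0 by simp
    have "ennreal ((\<phi> (x,0))\<^sup>2) \<le> (\<integral>\<^sup>+s. ennreal (indicator {0..?L} s *
            \<bar>2 * \<phi> ((x,0) + s *\<^sub>R (0,1)) * frechet_derivative \<phi> (at ((x,0) + s *\<^sub>R (0,1))) (0,1)\<bar>) \<partial>lborel)"
      by (rule line_bound[OF sm _ z]) (use R in simp)
    also have "\<dots> \<le> (\<integral>\<^sup>+t. ennreal (indicator S (x,t) * F (x,t)) \<partial>lborel)"
    proof (rule nn_integral_mono_AE)
      show "AE s in lborel. ennreal (indicator {0..?L} s *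
            \<bar>2 * \<phi> ((x,0) + s *\<^sub>R (0,1)) * frechet_derivative \<phi> (at ((x,0) + s *\<^sub>R (0,1))) (0,1)\<bar>)
            \<le> ennreal (indicator S (x,s) * F (x,s))"
        using AE_lborel_singleton[of 0]
      proof (rule AE_mp, intro AE_I2 impI)
        fix s :: real assume s0: "s \<noteq> 0"
        show "ennreal (indicator {0..?L} s *
            \<bar>2 * \<phi> ((x,0) + s *\<^sub>R (0,1)) * frechet_derivative \<phi> (at ((x,0) + s *\<^sub>R (0,1))) (0,1)\<bar>)
            \<le> ennreal (indicator S (x,s) * F (x,s))"
        proof (cases "s \<in> {0..?L}")
          case False then show ?thesis by simp
        next
          case True
          then have "s > 0" using s0 by auto
          then have "(x,s) \<in> S" using \<open>x \<in> \<Omega>\<close> by (simp add: S_def)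
          moreover have "\<bar>2 * \<phi> (x,s) * Dt (x,s)\<bar> \<le> F (x,s)"
            using amgm_abs[OF a, of "\<phi> (x,s)" "Dt (x,s)"] by (simp add: F_def)
          ultimately show ?thesis using True by (simp add: Dt_def ennreal_leI)
        qed
      qed
    qed
    finally show ?thesis using True by simp
  qed
  have mf: "(\<lambda>p. ennreal (indicator S p * F p)) \<in> borel_measurable lborel"
    by (rule meas_helper[OF oS cF])
  have "(\<integral>\<^sup>+x. ennreal (indicator \<Omega> x * (\<phi> (x,0))\<^sup>2) \<partial>lborel) \<le>
        (\<integral>\<^sup>+x. (\<integral>\<^sup>+t. ennreal (indicator S (x,t) * F (x,t)) \<partial>lborel) \<partial>lborel)"
    by (rule nn_integral_mono) (rule pt)
  also have "\<dots> = (\<integral>\<^sup>+p. ennreal (indicator S p * F p) \<partial>(lborel \<Otimes>\<^sub>M lborel))"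
    using lborel.nn_integral_fst[of "\<lambda>p. ennreal (indicator S p * F p)" lborel] mf
    by (simp add: lborel_prod)
  also have "\<dots> = (\<integral>\<^sup>+p. ennreal (indicator S p * F p) \<partial>lborel)" by (simp add: lborel_prod)
  finally have ineq: "(\<integral>\<^sup>+x. ennreal (indicator \<Omega> x * (\<phi> (x,0))\<^sup>2) \<partial>lborel) \<le>
     (\<integral>\<^sup>+p. ennreal (indicator S p * F p) \<partial>lborel)" .
  have cT: "continuous_on UNIV (\<lambda>x. (\<phi> (x,0))\<^sup>2)"
  proof -
    have "continuous_on UNIV (\<lambda>x::'a. (x, 0::real))" by (intro continuous_intros)
    then have "continuous_on UNIV (\<lambda>x. \<phi> (x,0))"
      using continuous_on_compose[of UNIV "\<lambda>x::'a. (x, 0::real)" \<phi>] continuous_on_subset[OF cphi]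
      by (simp add: o_def)
    then show ?thesis by (intro continuous_intros)
  qed
  have iT: "integrable (lebesgue_on \<Omega>) (\<lambda>x. (\<phi> (x,0))\<^sup>2)"
  proof (rule int_compact_support[OF _ _ cT])
    show "\<Omega> \<in> sets lebesgue" using o by (simp add: borel_open)
    show "compact (fst ` K)" using cK unfolding K_def by (intro compact_continuous_image continuous_intros)
    show "(\<phi> (x, 0))\<^sup>2 = 0" if "x \<notin> fst ` K" for x
    proof -
      have "(x,0) \<notin> K" using that by force
      then show ?thesis using phi0 by simp
    qed
  qed
  have SL: "S \<in> sets lebesgue" using oS by (simp add: borel_open)
  have iF: "integrable (lebesgue_on S) F"
    by (rule int_compact_support[of S K, OF SL _ cF F0]) (simp add: cK K_def)
  have iphi: "integrable (lebesgue_on S) (\<lambda>p. (\<phi> p)\<^sup>2)"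
    by (rule int_compact_support[OF SL _ _ ]) (use cK K_def phi0 in \<open>auto intro!: continuous_intros cphi\<close>)
  have iDt: "integrable (lebesgue_on S) (\<lambda>p. (Dt p)\<^sup>2)"
    by (rule int_compact_support[OF SL _ _ ]) (use cK K_def Dt0 in \<open>auto intro!: continuous_intros cDt\<close>)
  have e1: "ennreal (\<integral>x. (\<phi> (x,0))\<^sup>2 \<partial>lebesgue_on \<Omega>) = (\<integral>\<^sup>+x. ennreal (indicator \<Omega> x * (\<phi> (x,0))\<^sup>2) \<partial>lborel)"
    by (rule nn_bridge[OF _ _ _ iT]) (use o cT in \<open>auto simp: borel_open borel_measurable_continuous_onI\<close>)
  have e2: "ennreal (\<integral>p. F p \<partial>lebesgue_on S) = (\<integral>\<^sup>+p. ennreal (indicator S p * F p) \<partial>lborel)"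
    by (rule nn_bridge[OF _ _ _ iF]) (use oS cF Fnn in \<open>auto simp: borel_open borel_measurable_continuous_onI\<close>)
  have "(\<integral>x. (\<phi> (x,0))\<^sup>2 \<partial>lebesgue_on \<Omega>) \<le> (\<integral>p. F p \<partial>lebesgue_on S)"
    using ineq e1 e2 Fnn by (metis ennreal_le_iff integral_nonneg_AE AE_I2)
  also have "\<dots> = a * (\<integral>p. (\<phi> p)\<^sup>2 \<partial>lebesgue_on S) + (1/a) * (\<integral>p. (Dt p)\<^sup>2 \<partial>lebesgue_on S)"
    unfolding F_def using iphi iDt by simp
  finally show ?thesis by (simp add: S_def Dt_def)
qed

lemma poinc_point:
  fixes \<phi> :: "'a::euclidean_space \<times> real \<Rightarrow> real" and \<Omega> :: "'a set"
  assumes sm: "smooth_fun \<phi>" and o: "open \<Omega>" and bnd: "\<And>x. x \<in> \<Omega> \<Longrightarrow> norm x \<le> b"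
    and zero: "\<And>x t. x \<in> frontier \<Omega> \<Longrightarrow> \<phi> (x,t) = 0" and e: "e \<in> Basis"
    and x: "x \<in> \<Omega>" and t: "t > 0"
  shows "ennreal ((\<phi> (x,t))\<^sup>2) \<le> (\<integral>\<^sup>+s. ennreal (indicator {0..2*b+1} s *
     (indicator (\<Omega> \<times> {0<..}) ((x,t) + s *\<^sub>R (e,0)) *
      \<bar>2 * \<phi> ((x,t) + s *\<^sub>R (e,0)) * frechet_derivative \<phi> (at ((x,t) + s *\<^sub>R (e,0))) (e,0)\<bar>)) \<partial>lborel)"
proof -
  define D where "D = 2*b+1"
  define A where "A = {s::real. 0 \<le> s \<and> x + s *\<^sub>R e \<notin> \<Omega>}"
  have b0: "b \<ge> 0" using bnd[OF x] norm_ge_zero[of x] by linarith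
  have ne1: "norm e = 1" using e by simp
  have DA: "D \<in> A"
  proof -
    have "norm (D *\<^sub>R e) \<le> norm (x + D *\<^sub>R e) + norm x" by (metis add_diff_cancel_left' norm_triangle_ineq4 add.commute norm_diff_ineq diff_add_cancel norm_triangle_sub)
    moreover have "norm (D *\<^sub>R e) = D" using ne1 b0 by (simp add: D_def)
    ultimately have "norm (x + D *\<^sub>R e) > b" using bnd[OF x] by (simp add: D_def)
    then show ?thesis using bnd b0 by (force simp: A_def D_def)
  qed
  have clA: "closed A"
  proof -
    have "A = {0..} \<inter> (\<lambda>s. x + s *\<^sub>R e) -` (- \<Omega>)" by (auto simp: A_def)
    moreover have "closed ((\<lambda>s. x + s *\<^sub>R e) -` (- \<Omega>))"
      by (rule continuous_closed_vimage) (use o in \<open>auto intro!: continuous_intros\<close>)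
    ultimately show ?thesis by (simp add: closed_Int)
  qed
  define s0 where "s0 = Inf A"
  have bddA: "bdd_below A" by (auto simp: A_def bdd_below_def)
  have s0A: "s0 \<in> A" unfolding s0_def by (rule closed_contains_Inf) (use DA bddA clA in auto)
  have s0D: "s0 \<le> D" unfolding s0_def using DA bddA by (rule cInf_lower)
  have s0pos: "s0 > 0"
  proof -
    have "s0 \<ge> 0" using s0A by (simp add: A_def)
    moreover have "s0 \<noteq> 0" using s0A x by (auto simp: A_def)
    ultimately show ?thesis by simp
  qed
  have inside: "x + s *\<^sub>R e \<in> \<Omega>" if "0 \<le> s" "s < s0" for s
  proof (rule ccontr)
    assume "x + s *\<^sub>R e \<notin> \<Omega>"
    then have "s \<in> A" using that by (simp add: A_def)
    then have "s0 \<le> s" unfolding s0_def using bddA by (rule cInf_lower)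
    then show False using that by simp
  qed
  have "(\<lambda>s. x + s *\<^sub>R e) ` closure {0..<s0} \<subseteq> closure \<Omega>"
    by (rule image_closure_subset) (use inside in \<open>auto intro!: continuous_intros closure_subset[THEN subsetD]\<close>)
  then have "x + s0 *\<^sub>R e \<in> closure \<Omega>" using s0pos by (auto simp: image_subset_iff)
  moreover have "x + s0 *\<^sub>R e \<notin> \<Omega>" using s0A by (simp add: A_def)
  ultimately have fr: "x + s0 *\<^sub>R e \<in> frontier \<Omega>" using o by (simp add: frontier_def interior_open)
  have z: "\<phi> ((x,t) + s0 *\<^sub>R (e,0)) = 0" using zero[OF fr] by simp
  have "ennreal ((\<phi> (x,t))\<^sup>2) \<le> (\<integral>\<^sup>+s. ennreal (indicator {0..s0} s *
            \<bar>2 * \<phi> ((x,t) + s *\<^sub>R (e,0)) * frechet_derivative \<phi> (at ((x,t) + s *\<^sub>R (e,0))) (e,0)\<bar>) \<partial>lborel)"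
    by (rule line_bound[OF sm _ z]) (use s0pos in simp)
  also have "\<dots> \<le> (\<integral>\<^sup>+s. ennreal (indicator {0..2*b+1} s *
     (indicator (\<Omega> \<times> {0<..}) ((x,t) + s *\<^sub>R (e,0)) *
      \<bar>2 * \<phi> ((x,t) + s *\<^sub>R (e,0)) * frechet_derivative \<phi> (at ((x,t) + s *\<^sub>R (e,0))) (e,0)\<bar>)) \<partial>lborel)"
  proof (rule nn_integral_mono)
    fix s :: real
    show "ennreal (indicator {0..s0} s *
            \<bar>2 * \<phi> ((x,t) + s *\<^sub>R (e,0)) * frechet_derivative \<phi> (at ((x,t) + s *\<^sub>R (e,0))) (e,0)\<bar>)
      \<le> ennreal (indicator {0..2*b+1} s *
     (indicator (\<Omega> \<times> {0<..}) ((x,t) + s *\<^sub>R (e,0)) *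
      \<bar>2 * \<phi> ((x,t) + s *\<^sub>R (e,0)) * frechet_derivative \<phi> (at ((x,t) + s *\<^sub>R (e,0))) (e,0)\<bar>))"
    proof (cases "0 \<le> s \<and> s < s0")
      case True
      then have "(x,t) + s *\<^sub>R (e,0) \<in> \<Omega> \<times> {0<..}" using inside t by simp
      moreover have "s \<in> {0..2*b+1}" using True s0D by (simp add: D_def)
      moreover have "s \<in> {0..s0}" using True by simp
      ultimately show ?thesis by simp
    next
      case False
      show ?thesis
      proof (cases "s = s0")
        case True then show ?thesis using z by simp
      next
        case False
        then have "s \<notin> {0..s0}" using \<open>\<not> (0 \<le> s \<and> s < s0)\<close> by auto
        then show ?thesis by simp
      qed
    qed
  qed
  finally show ?thesis .
qed

lemma translate_nn:
  fixes g :: "'a::euclidean_space \<Rightarrow> ennreal"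
  assumes g: "g \<in> borel_measurable borel"
  shows "(\<integral>\<^sup>+p. g (p + c) \<partial>lborel) = (\<integral>\<^sup>+p. g p \<partial>lborel)"
proof -
  have "(\<integral>\<^sup>+p. g p \<partial>lborel) = (\<integral>\<^sup>+p. g p \<partial>distr lborel borel ((+) c))" by (simp add: lborel_distr_plus)
  also have "\<dots> = (\<integral>\<^sup>+p. g (c + p) \<partial>lborel)" by (rule nn_integral_distr) (use g in auto)
  finally show ?thesis by (simp add: add.commute)
qed

lemma poincare_real:
  fixes \<phi> :: "'a::euclidean_space \<times> real \<Rightarrow> real" and \<Omega> :: "'a set"
  assumes sm: "smooth_fun \<phi>" and cK: "compact (supp_closed \<phi>)" and o: "open \<Omega>"
    and b: "b > 0" and bnd: "\<And>x. x \<in> \<Omega> \<Longrightarrow> norm x \<le> b"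
    and zero: "\<And>x t. x \<in> frontier \<Omega> \<Longrightarrow> \<phi> (x,t) = 0" and e: "e \<in> Basis"
  shows "(\<integral>p. (\<phi> p)\<^sup>2 \<partial>lebesgue_on (\<Omega> \<times> {0<..})) \<le>
     4*(2*b+1)\<^sup>2 * (\<integral>p. (frechet_derivative \<phi> (at p) (e,0))\<^sup>2 \<partial>lebesgue_on (\<Omega> \<times> {0<..}))"
proof -
  define D where "D = 2*b+1"
  have D: "D > 0" using b by (simp add: D_def)
  define a where "a = 1/(2*D)"
  have a: "a > 0" using D by (simp add: a_def)
  define K where "K = supp_closed \<phi>"
  define S where "S = \<Omega> \<times> {0::real<..}"
  define v where "v = (e, 0::real)"
  define Dv where "Dv p = frechet_derivative \<phi> (at p) v" for p
  define F where "F p = a * (\<phi> p)\<^sup>2 + (1/a) * (Dv p)\<^sup>2" for p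
  define \<psi> where "\<psi> p = indicator S p * F p" for p
  have oS: "open S" unfolding S_def using o by (intro open_Times) auto
  have phi0: "\<phi> p = 0" if "p \<notin> K" for p using that supp_nz unfolding K_def by blast
  have Dv0: "Dv p = 0" if "p \<notin> K" for p using that deriv_out_supp unfolding K_def Dv_def by blast
  have cphi: "continuous_on UNIV \<phi>" by (rule smooth_cont[OF sm])
  have cDv: "continuous_on UNIV Dv" unfolding Dv_def by (rule smooth_dcont[OF sm])
  have cF: "continuous_on UNIV F" unfolding F_def by (intro continuous_intros cphi cDv)
  have F0: "F p = 0" if "p \<notin> K" for p using that phi0 Dv0 by (simp add: F_def)
  have Fnn: "F p \<ge> 0" for p using a by (simp add: F_def)
  have psinn: "\<psi> p \<ge> 0" for p using Fnn by (simp add: \<psi>_def)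
  have [measurable]: "S \<in> sets borel" using oS by (simp add: borel_open)
  have [measurable]: "F \<in> borel_measurable borel" using cF by (simp add: borel_measurable_continuous_onI)
  define G where "G q = ennreal (indicator {0..D} (snd q) * \<psi> (fst q + snd q *\<^sub>R v))" for q :: "('a \<times> real) \<times> real"
  have mpsi: "\<psi> \<in> borel_measurable borel" unfolding \<psi>_def by measurable
  have cm: "(\<lambda>q::('a \<times> real) \<times> real. fst q + snd q *\<^sub>R v) \<in> borel_measurable borel"
    by (intro borel_measurable_continuous_onI continuous_intros)
  have m1[measurable]: "(\<lambda>q::('a \<times> real) \<times> real. \<psi> (fst q + snd q *\<^sub>R v)) \<in> borel_measurable borel"
    using measurable_compose[OF cm mpsi] by (simp add: o_def)
  have msnd: "(snd :: ('a \<times> real) \<times> real \<Rightarrow> real) \<in> borel_measurable borel"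
    by (intro borel_measurable_continuous_onI continuous_intros)
  have mind: "(indicator {0..D} :: real \<Rightarrow> real) \<in> borel_measurable borel" by measurable
  have m2[measurable]: "(\<lambda>q::('a \<times> real) \<times> real. indicator {0..D} (snd q) :: real) \<in> borel_measurable borel"
    using measurable_compose[OF msnd mind] by (simp add: o_def)
  have "G \<in> borel_measurable borel" unfolding G_def by measurable
  then have mG: "G \<in> borel_measurable (lborel \<Otimes>\<^sub>M lborel)" by (simp add: lborel_prod)
  have pt: "ennreal (indicator S p * (\<phi> p)\<^sup>2) \<le> (\<integral>\<^sup>+s. G (p, s) \<partial>lborel)" for p
  proof (cases "p \<in> S")
    case False then show ?thesis by simp
  next
    case True
    obtain x t where p: "p = (x,t)" and x: "x \<in> \<Omega>" and t: "t > 0" using True by (auto simp: S_def)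
    have "ennreal ((\<phi> (x,t))\<^sup>2) \<le> (\<integral>\<^sup>+s. ennreal (indicator {0..2*b+1} s *
     (indicator (\<Omega> \<times> {0<..}) ((x,t) + s *\<^sub>R (e,0)) *
      \<bar>2 * \<phi> ((x,t) + s *\<^sub>R (e,0)) * frechet_derivative \<phi> (at ((x,t) + s *\<^sub>R (e,0))) (e,0)\<bar>)) \<partial>lborel)"
      by (rule poinc_point[OF sm o bnd zero e x t])
    also have "\<dots> \<le> (\<integral>\<^sup>+s. G (p, s) \<partial>lborel)"
    proof (rule nn_integral_mono)
      fix s :: real
      let ?q = "(x,t) + s *\<^sub>R (e,0)"
      have "\<bar>2 * \<phi> ?q * Dv ?q\<bar> \<le> F ?q" using amgm_abs[OF a, of "\<phi> ?q" "Dv ?q"] by (simp add: F_def)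
      then have "indicator {0..2*b+1} s * (indicator (\<Omega> \<times> {0<..}) ?q * \<bar>2 * \<phi> ?q * Dv ?q\<bar>)
          \<le> indicator {0..D} s * \<psi> ?q"
        by (simp add: \<psi>_def S_def D_def indicator_def)
      then show "ennreal (indicator {0..2*b+1} s * (indicator (\<Omega> \<times> {0<..}) ?q *
          \<bar>2 * \<phi> ?q * frechet_derivative \<phi> (at ?q) (e,0)\<bar>)) \<le> G (p, s)"
        by (simp add: G_def p Dv_def v_def ennreal_leI)
    qed
    finally show ?thesis using True p by simp
  qed
  define I where "I = (\<integral>\<^sup>+p. ennreal (\<psi> p) \<partial>lborel)"
  have inner: "(\<integral>\<^sup>+p. G (p, s) \<partial>lborel) = I * indicator {0..D} s" for s
  proof (cases "s \<in> {0..D}")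
    case False then show ?thesis by (simp add: G_def)
  next
    case True
    have [measurable]: "(\<lambda>p. ennreal (\<psi> p)) \<in> borel_measurable borel" unfolding \<psi>_def by measurable
    have "(\<integral>\<^sup>+p. G (p, s) \<partial>lborel) = (\<integral>\<^sup>+p. ennreal (\<psi> (p + s *\<^sub>R v)) \<partial>lborel)"
      using True by (simp add: G_def)
    also have "\<dots> = I" unfolding I_def by (rule translate_nn) measurable
    finally show ?thesis using True by simp
  qed
  have "(\<integral>\<^sup>+p. ennreal (indicator S p * (\<phi> p)\<^sup>2) \<partial>lborel) \<le> (\<integral>\<^sup>+p. (\<integral>\<^sup>+s. G (p, s) \<partial>lborel) \<partial>lborel)"
    by (rule nn_integral_mono) (rule pt)
  also have "\<dots> = (\<integral>\<^sup>+s. (\<integral>\<^sup>+p. G (p, s) \<partial>lborel) \<partial>lborel)"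
    by (rule lborel_pair.Fubini[OF mG, symmetric])
  also have "\<dots> = (\<integral>\<^sup>+s. I * indicator {0..D} s \<partial>lborel)" by (simp add: inner)
  also have "\<dots> = I * ennreal D" using D by (simp add: nn_integral_cmult_indicator)
  finally have ineq: "(\<integral>\<^sup>+p. ennreal (indicator S p * (\<phi> p)\<^sup>2) \<partial>lborel) \<le> I * ennreal D" .
  have SL: "S \<in> sets lebesgue" using oS by (simp add: borel_open)
  have iF: "integrable (lebesgue_on S) F"
    by (rule int_compact_support[of S K, OF SL _ cF F0]) (simp add: cK K_def)
  have iphi: "integrable (lebesgue_on S) (\<lambda>p. (\<phi> p)\<^sup>2)"
    by (rule int_compact_support[OF SL _ _ ]) (use cK K_def phi0 in \<open>auto intro!: continuous_intros cphi\<close>)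
  have iDv: "integrable (lebesgue_on S) (\<lambda>p. (Dv p)\<^sup>2)"
    by (rule int_compact_support[OF SL _ _ ]) (use cK K_def Dv0 in \<open>auto intro!: continuous_intros cDv\<close>)
  have e1: "ennreal (\<integral>p. (\<phi> p)\<^sup>2 \<partial>lebesgue_on S) = (\<integral>\<^sup>+p. ennreal (indicator S p * (\<phi> p)\<^sup>2) \<partial>lborel)"
    by (rule nn_bridge[OF _ _ _ iphi]) (use oS cphi in \<open>auto simp: borel_open intro!: borel_measurable_continuous_onI continuous_intros\<close>)
  have e2: "ennreal (\<integral>p. F p \<partial>lebesgue_on S) = I"
    unfolding I_def \<psi>_def by (rule nn_bridge[OF _ _ _ iF]) (use oS cF Fnn in \<open>auto simp: borel_open borel_measurable_continuous_onI\<close>)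
  have "ennreal (\<integral>p. (\<phi> p)\<^sup>2 \<partial>lebesgue_on S) \<le> ennreal ((\<integral>p. F p \<partial>lebesgue_on S) * D)"
    using ineq e1 e2 D by (simp add: ennreal_mult'')
  then have B: "(\<integral>p. (\<phi> p)\<^sup>2 \<partial>lebesgue_on S) \<le> (\<integral>p. F p \<partial>lebesgue_on S) * D"
    using Fnn D by (subst (asm) ennreal_le_iff) (auto intro!: mult_nonneg_nonneg integral_nonneg_AE)
  have "(\<integral>p. F p \<partial>lebesgue_on S) = a * (\<integral>p. (\<phi> p)\<^sup>2 \<partial>lebesgue_on S) + (1/a) * (\<integral>p. (Dv p)\<^sup>2 \<partial>lebesgue_on S)"
    unfolding F_def using iphi iDv by simp
  then have "(\<integral>p. (\<phi> p)\<^sup>2 \<partial>lebesgue_on S) \<le> (1/2) * (\<integral>p. (\<phi> p)\<^sup>2 \<partial>lebesgue_on S) + 2*D\<^sup>2 * (\<integral>p. (Dv p)\<^sup>2 \<partial>lebesgue_on S)"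
    using B D by (simp add: a_def field_simps power2_eq_square)
  then show ?thesis by (simp add: S_def D_def Dv_def v_def)
qed



lemma smooth_ineq:
  fixes \<phi> :: "'a::euclidean_space \<times> real \<Rightarrow> real" and \<Omega> :: "'a set" and e :: 'a
  assumes sm: "smooth_fun \<phi>" and cK: "compact (supp_closed \<phi>)" and o: "open \<Omega>"
    and b: "b > 0" and bnd: "\<And>x. x \<in> \<Omega> \<Longrightarrow> norm x \<le> b"
    and zero: "\<And>x t. x \<in> frontier \<Omega> \<Longrightarrow> \<phi> (x,t) = 0" and e: "e \<in> Basis" and m: "m > 0"
    and \<delta>: "\<delta> = 1/(4 + 4*(m\<^sup>2 * (4*(2*b+1)\<^sup>2)))"
  shows "0 \<le> (1-\<delta>) * (\<integral>p. (norm (grad \<phi> p))\<^sup>2 \<partial>lebesgue_on (\<Omega> \<times> {0<..}))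
           + m\<^sup>2 * (\<integral>p. (\<phi> p)\<^sup>2 \<partial>lebesgue_on (\<Omega> \<times> {0<..}))
           - m * (\<integral>x. (\<phi> (x,0))\<^sup>2 \<partial>lebesgue_on \<Omega>)"
proof -
  define S where "S = \<Omega> \<times> {0::real<..}"
  define K where "K = supp_closed \<phi>"
  define K0 where "K0 = 4*(2*b+1)\<^sup>2"
  define c where "c = m\<^sup>2 * K0"
  have c0: "c > 0" using m b by (simp add: c_def K0_def)
  have d: "\<delta> = 1/(4+4*c)" using \<delta> by (simp add: c_def K0_def)
  have d0a: "\<delta> > 0" using c0 by (simp add: d)
  have d0b: "\<delta> \<le> 1/4" unfolding d using c0 by (intro divide_left_mono) auto
  note d0 = d0a d0b
  have dc: "c * \<delta> \<le> (1-\<delta>)\<^sup>2"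
  proof -
    have "c * \<delta> = c/(4+4*c)" using d by simp
    also have "\<dots> \<le> 1/4" using c0 by (simp add: field_simps)
    also have "1/4 \<le> (1-\<delta>)\<^sup>2"
    proof -
      have "3/4 \<le> 1 - \<delta>" using d0 by simp
      then have "(3/4)\<^sup>2 \<le> (1-\<delta>)\<^sup>2" by (rule power_mono) simp
      then show ?thesis by (simp add: power2_eq_square)
    qed
    finally show ?thesis .
  qed
  define N where "N = (\<integral>p. (norm (grad \<phi> p))\<^sup>2 \<partial>lebesgue_on S)"
  define B where "B = (\<integral>p. (\<phi> p)\<^sup>2 \<partial>lebesgue_on S)"
  define T where "T = (\<integral>x. (\<phi> (x,0))\<^sup>2 \<partial>lebesgue_on \<Omega>)"
  define A where "A = (\<integral>p. (frechet_derivative \<phi> (at p) (0,1))\<^sup>2 \<partial>lebesgue_on S)"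
  define E where "E = (\<integral>p. (frechet_derivative \<phi> (at p) (e,0))\<^sup>2 \<partial>lebesgue_on S)"
  have oS: "open S" unfolding S_def using o by (intro open_Times) auto
  have SL: "S \<in> sets lebesgue" using oS by (simp add: borel_open)
  have phi0: "\<phi> p = 0" if "p \<notin> K" for p using that supp_nz unfolding K_def by blast
  have Dz: "frechet_derivative \<phi> (at p) w = 0" if "p \<notin> K" for p w using that deriv_out_supp unfolding K_def by blast
  have cD: "continuous_on UNIV (\<lambda>p. frechet_derivative \<phi> (at p) w)" for w by (rule smooth_dcont[OF sm])
  have cgrad: "continuous_on UNIV (grad \<phi>)"
    unfolding grad_def[abs_def] by (intro continuous_intros cD)
  have grad0: "grad \<phi> p = 0" if "p \<notin> K" for p using Dz[OF that] by (simp add: grad_def)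
  have iN: "integrable (lebesgue_on S) (\<lambda>p. (norm (grad \<phi> p))\<^sup>2)"
    by (rule int_compact_support[of S K, OF SL]) (use cK K_def grad0 in \<open>auto intro!: continuous_intros cgrad\<close>)
  have iA: "integrable (lebesgue_on S) (\<lambda>p. (frechet_derivative \<phi> (at p) (0,1))\<^sup>2)"
    by (rule int_compact_support[of S K, OF SL]) (use cK K_def Dz in \<open>auto intro!: continuous_intros cD\<close>)
  have iE: "integrable (lebesgue_on S) (\<lambda>p. (frechet_derivative \<phi> (at p) (e,0))\<^sup>2)"
    by (rule int_compact_support[of S K, OF SL]) (use cK K_def Dz in \<open>auto intro!: continuous_intros cD\<close>)
  have NAE: "A + E \<le> N"
  proof -
    have "A + E = (\<integral>p. (frechet_derivative \<phi> (at p) (0,1))\<^sup>2 + (frechet_derivative \<phi> (at p) (e,0))\<^sup>2 \<partial>lebesgue_on S)"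
      unfolding A_def E_def using iA iE by simp
    also have "\<dots> \<le> N" unfolding N_def
      by (rule integral_mono) (use iA iE iN grad_norm_ge[OF e] in auto)
    finally show ?thesis .
  qed
  have E0: "E \<ge> 0" unfolding E_def by simp
  have A0: "A \<ge> 0" unfolding A_def by simp
  have B0: "B \<ge> 0" unfolding B_def by simp
  have PB: "B \<le> K0 * E"
    using poincare_real[OF sm cK o b bnd zero e] by (simp add: B_def E_def K0_def S_def)
  define a where "a = m/(1-\<delta>)"
  have a: "a > 0" using m d0 by (simp add: a_def)
  have TR: "T \<le> a * B + (1/a) * A"
    using trace_real[OF sm cK o a] by (simp add: T_def B_def A_def S_def)
  have mT: "m * T \<le> m\<^sup>2/(1-\<delta>) * B + (1-\<delta>) * A"
  proof -
    have "m * T \<le> m * (a * B + (1/a) * A)" using TR m by simp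
    also have "\<dots> = m\<^sup>2/(1-\<delta>) * B + (1-\<delta>) * A" using m d0 by (simp add: a_def field_simps power2_eq_square)
    finally show ?thesis .
  qed
  define q where "q = c * \<delta> / (1-\<delta>)"
  have q1: "q \<le> 1 - \<delta>" using dc d0 by (simp add: q_def field_simps power2_eq_square)
  have q0: "q \<ge> 0" using c0 d0 by (simp add: q_def)
  have X: "m\<^sup>2/(1-\<delta>) * B - m\<^sup>2 * B = m\<^sup>2 * B * (\<delta>/(1-\<delta>))" using d0 by (simp add: field_simps)
  have XB: "m\<^sup>2 * B * (\<delta>/(1-\<delta>)) \<le> q * (N - A)"
  proof -
    have "m\<^sup>2 * B \<le> m\<^sup>2 * (K0 * E)" using PB by (simp add: mult_left_mono)
    also have "\<dots> \<le> c * (N - A)" using NAE c0 by (simp add: c_def mult.assoc[symmetric] mult_left_mono)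
    finally have "m\<^sup>2 * B * (\<delta>/(1-\<delta>)) \<le> c * (N - A) * (\<delta>/(1-\<delta>))"
      using d0 by (intro mult_right_mono) auto
    then show ?thesis by (simp add: q_def field_simps)
  qed
  have "0 \<le> (1-\<delta>-q) * (N - A)" using q1 NAE E0 by simp
  then have "0 \<le> (1-\<delta>) * N + m\<^sup>2 * B - m * T"
    using mT X XB d0 A0 by (simp add: algebra_simps) 
  then show ?thesis by (simp add: N_def B_def T_def S_def)
qed



lemma smooth_int_facts:
  fixes \<phi> :: "'a::euclidean_space \<times> real \<Rightarrow> real"
  assumes sm: "smooth_fun \<phi>" and cK: "compact (supp_closed \<phi>)" and SL: "S \<in> sets lebesgue"
    and OL: "\<Omega> \<in> sets lebesgue"
  shows "integrable (lebesgue_on S) (\<lambda>p. (norm (grad \<phi> p))\<^sup>2)"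
    and "grad \<phi> \<in> borel_measurable (lebesgue_on S)"
    and "integrable (lebesgue_on S) (\<lambda>p. (norm (\<phi> p))\<^sup>2)"
    and "\<phi> \<in> borel_measurable (lebesgue_on S)"
    and "integrable (lebesgue_on \<Omega>) (\<lambda>x. (norm (\<phi> (x,0)))\<^sup>2)"
    and "(\<lambda>x. \<phi> (x,0)) \<in> borel_measurable (lebesgue_on \<Omega>)"
proof -
  define K where "K = supp_closed \<phi>"
  have phi0: "\<phi> p = 0" if "p \<notin> K" for p using that supp_nz unfolding K_def by blast
  have Dz: "frechet_derivative \<phi> (at p) w = 0" if "p \<notin> K" for p w using that deriv_out_supp unfolding K_def by blast
  have cD: "continuous_on UNIV (\<lambda>p. frechet_derivative \<phi> (at p) w)" for w by (rule smooth_dcont[OF sm])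
  have cgrad: "continuous_on UNIV (grad \<phi>)"
    unfolding grad_def[abs_def] by (intro continuous_intros cD)
  have grad0: "grad \<phi> p = 0" if "p \<notin> K" for p using Dz[OF that] by (simp add: grad_def)
  have cphi: "continuous_on UNIV \<phi>" by (rule smooth_cont[OF sm])
  show "integrable (lebesgue_on S) (\<lambda>p. (norm (grad \<phi> p))\<^sup>2)"
    by (rule int_compact_support[of S K, OF SL]) (use cK K_def grad0 in \<open>auto intro!: continuous_intros cgrad\<close>)
  show "grad \<phi> \<in> borel_measurable (lebesgue_on S)"
    by (rule continuous_imp_measurable_on_sets_lebesgue[OF continuous_on_subset[OF cgrad] SL]) simp
  show "integrable (lebesgue_on S) (\<lambda>p. (norm (\<phi> p))\<^sup>2)"
    by (rule int_compact_support[of S K, OF SL]) (use cK K_def phi0 in \<open>auto intro!: continuous_intros cphi\<close>)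
  show "\<phi> \<in> borel_measurable (lebesgue_on S)"
    by (rule continuous_imp_measurable_on_sets_lebesgue[OF continuous_on_subset[OF cphi] SL]) simp
  have c0: "continuous_on UNIV (\<lambda>x. \<phi> (x,0))"
  proof -
    have "continuous_on UNIV (\<lambda>x::'a. (x, 0::real))" by (intro continuous_intros)
    then show ?thesis
      using continuous_on_compose[of UNIV "\<lambda>x::'a. (x, 0::real)" \<phi>] continuous_on_subset[OF cphi]
      by (simp add: o_def)
  qed
  show "integrable (lebesgue_on \<Omega>) (\<lambda>x. (norm (\<phi> (x,0)))\<^sup>2)"
  proof (rule int_compact_support[OF OL])
    show "compact (fst ` K)" using cK unfolding K_def by (intro compact_continuous_image continuous_intros)
    show "continuous_on UNIV (\<lambda>x. (norm (\<phi> (x,0)))\<^sup>2)" by (intro continuous_intros c0)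
    show "(norm (\<phi> (x, 0)))\<^sup>2 = 0" if "x \<notin> fst ` K" for x
    proof -
      have "(x,0) \<notin> K" using that by force
      then show ?thesis using phi0 by simp
    qed
  qed
  show "(\<lambda>x. \<phi> (x,0)) \<in> borel_measurable (lebesgue_on \<Omega>)"
    by (rule continuous_imp_measurable_on_sets_lebesgue[OF continuous_on_subset[OF c0] OL]) simp
qed

theorem proposition2p4:
  fixes \<Omega> :: "(real ^ 'n) set" and m :: real
  assumes "CARD('n) \<ge> 3"
    and "smooth_bounded_domain \<Omega>"
    and "m > 0"
  shows "\<exists>C>0. \<forall>U G g. H10L_trace \<Omega> U G g \<longrightarrow>
           (\<integral>p. (norm (G p))\<^sup>2 \<partial>lebesgue_on (cyl \<Omega>))
           + m\<^sup>2 * (\<integral>p. (U p)\<^sup>2 \<partial>lebesgue_on (cyl \<Omega>))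
           - m * (\<integral>x. (g x)\<^sup>2 \<partial>lebesgue_on \<Omega>)
           \<ge> C * (\<integral>p. (norm (G p))\<^sup>2 \<partial>lebesgue_on (cyl \<Omega>))"
proof -
  have m: "m > 0" by (rule assms(3))
  from assms(2) obtain \<rho> where bd: "bounded \<Omega>" and sr: "smooth_fun \<rho>" and Oeq: "\<Omega> = {x. \<rho> x < 0}"
    unfolding smooth_bounded_domain_def by blast
  have o: "open \<Omega>" unfolding Oeq
    by (rule open_Collect_less) (use smooth_cont[OF sr] in auto)
  obtain b where b: "b > 0" and bnd: "\<And>x. x \<in> \<Omega> \<Longrightarrow> norm x \<le> b" using bd unfolding bounded_pos by blast
  obtain e :: "real ^ 'n" where e: "e \<in> Basis" using nonempty_Basis by blast
  define \<delta> where "\<delta> = 1/(4 + 4*(m\<^sup>2 * (4*(2*b+1)\<^sup>2)))"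
  have d0: "\<delta> > 0" unfolding \<delta>_def using m b by (simp add: add_pos_nonneg)
  define S where "S = \<Omega> \<times> {0::real<..}"
  have cyl: "cyl \<Omega> = S" by (simp add: cyl_def S_def)
  have SL: "S \<in> sets lebesgue" unfolding S_def using o by (simp add: borel_open open_Times)
  have OL: "\<Omega> \<in> sets lebesgue" using o by (simp add: borel_open)
  show ?thesis
  proof (intro exI[of _ \<delta>] conjI allI impI)
    show "\<delta> > 0" by (rule d0)
    fix U G g assume H: "H10L_trace \<Omega> U G g"
    then have H1: "H1 S U G" and gm: "g \<in> borel_measurable (lebesgue_on \<Omega>)"
      and gi: "integrable (lebesgue_on \<Omega>) (\<lambda>x. (g x)\<^sup>2)"
      unfolding H10L_trace_def cyl by auto
    from H obtain \<phi> :: "nat \<Rightarrow> (real^'n) \<times> real \<Rightarrow> real" where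
      ph: "\<And>k. smooth_fun (\<phi> k)" "\<And>k. compact (supp_closed (\<phi> k))"
          "\<And>k x t. x \<in> frontier \<Omega> \<Longrightarrow> \<phi> k (x, t) = 0"
      and l1: "(\<lambda>k. \<integral>p. (\<phi> k p - U p)\<^sup>2 \<partial>lebesgue_on S) \<longlonglongrightarrow> 0"
      and l2: "(\<lambda>k. \<integral>p. (norm (grad (\<phi> k) p - G p))\<^sup>2 \<partial>lebesgue_on S) \<longlonglongrightarrow> 0"
      and l3: "(\<lambda>k. \<integral>x. (\<phi> k (x, 0) - g x)\<^sup>2 \<partial>lebesgue_on \<Omega>) \<longlonglongrightarrow> 0"
      unfolding H10L_trace_def cyl by blast
    have Um: "U \<in> borel_measurable (lebesgue_on S)" and Gm: "G \<in> borel_measurable (lebesgue_on S)"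
      and Ui: "integrable (lebesgue_on S) (\<lambda>p. (U p)\<^sup>2)"
      and Gi: "integrable (lebesgue_on S) (\<lambda>p. (norm (G p))\<^sup>2)"
      using H1 unfolding H1_def by auto
    note F = smooth_int_facts[OF ph(1) ph(2) SL OL]
    have LN: "(\<lambda>k. \<integral>p. (norm (grad (\<phi> k) p))\<^sup>2 \<partial>lebesgue_on S) \<longlonglongrightarrow> (\<integral>p. (norm (G p))\<^sup>2 \<partial>lebesgue_on S)"
      by (rule L2_conv[OF Gi F(1) int_diff_sq[OF F(1) Gi F(2) Gm] l2])
    have LB: "(\<lambda>k. \<integral>p. (norm (\<phi> k p))\<^sup>2 \<partial>lebesgue_on S) \<longlonglongrightarrow> (\<integral>p. (norm (U p))\<^sup>2 \<partial>lebesgue_on S)"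
    proof (rule L2_conv)
      show "integrable (lebesgue_on S) (\<lambda>p. (norm (U p))\<^sup>2)" using Ui by simp
      show "integrable (lebesgue_on S) (\<lambda>p. (norm (\<phi> k p))\<^sup>2)" for k by (rule F(3))
      show "integrable (lebesgue_on S) (\<lambda>p. (norm (\<phi> k p - U p))\<^sup>2)" for k
        by (rule int_diff_sq[OF F(3)]) (use Ui F(4) Um in auto)
      show "(\<lambda>k. \<integral>p. (norm (\<phi> k p - U p))\<^sup>2 \<partial>lebesgue_on S) \<longlonglongrightarrow> 0" using l1 by simp
    qed
    have LT: "(\<lambda>k. \<integral>x. (norm (\<phi> k (x,0)))\<^sup>2 \<partial>lebesgue_on \<Omega>) \<longlonglongrightarrow> (\<integral>x. (norm (g x))\<^sup>2 \<partial>lebesgue_on \<Omega>)"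
    proof (rule L2_conv)
      show "integrable (lebesgue_on \<Omega>) (\<lambda>x. (norm (g x))\<^sup>2)" using gi by simp
      show "integrable (lebesgue_on \<Omega>) (\<lambda>x. (norm (\<phi> k (x,0)))\<^sup>2)" for k by (rule F(5))
      show "integrable (lebesgue_on \<Omega>) (\<lambda>x. (norm (\<phi> k (x,0) - g x))\<^sup>2)" for k
        by (rule int_diff_sq[OF F(5)]) (use gi F(6) gm in auto)
      show "(\<lambda>k. \<integral>x. (norm (\<phi> k (x,0) - g x))\<^sup>2 \<partial>lebesgue_on \<Omega>) \<longlonglongrightarrow> 0" using l3 by simp
    qed
    define N where "N = (\<integral>p. (norm (G p))\<^sup>2 \<partial>lebesgue_on S)"
    define B where "B = (\<integral>p. (U p)\<^sup>2 \<partial>lebesgue_on S)"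
    define T where "T = (\<integral>x. (g x)\<^sup>2 \<partial>lebesgue_on \<Omega>)"
    have lim: "(\<lambda>k. (1-\<delta>) * (\<integral>p. (norm (grad (\<phi> k) p))\<^sup>2 \<partial>lebesgue_on S)
           + m\<^sup>2 * (\<integral>p. (\<phi> k p)\<^sup>2 \<partial>lebesgue_on S)
           - m * (\<integral>x. (\<phi> k (x,0))\<^sup>2 \<partial>lebesgue_on \<Omega>)) \<longlonglongrightarrow> (1-\<delta>) * N + m\<^sup>2 * B - m * T"
      unfolding N_def B_def T_def using LN LB LT by (auto intro!: tendsto_intros)
    have ev: "0 \<le> (1-\<delta>) * (\<integral>p. (norm (grad (\<phi> k) p))\<^sup>2 \<partial>lebesgue_on S)
           + m\<^sup>2 * (\<integral>p. (\<phi> k p)\<^sup>2 \<partial>lebesgue_on S)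
           - m * (\<integral>x. (\<phi> k (x,0))\<^sup>2 \<partial>lebesgue_on \<Omega>)" for k
      using smooth_ineq[OF ph(1) ph(2) o b bnd ph(3) e m \<delta>_def] by (simp add: S_def)
    have "0 \<le> (1-\<delta>) * N + m\<^sup>2 * B - m * T"
      by (rule LIMSEQ_le_const[OF lim]) (use ev in blast)
    then have "\<delta> * N \<le> N + m\<^sup>2 * B - m * T" by (simp add: algebra_simps)
    then show "\<delta> * (\<integral>p. (norm (G p))\<^sup>2 \<partial>lebesgue_on (cyl \<Omega>))
        \<le> (\<integral>p. (norm (G p))\<^sup>2 \<partial>lebesgue_on (cyl \<Omega>)) + m\<^sup>2 * (\<integral>p. (U p)\<^sup>2 \<partial>lebesgue_on (cyl \<Omega>))
          - m * (\<integral>x. (g x)\<^sup>2 \<partial>lebesgue_on \<Omega>)"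
      by (simp add: cyl N_def B_def T_def)
  qed
qed

end
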